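(* Consider the networked SEIRS model with travel flows, under the standing assumptions (A1) for every $j\in[n]$, $\sum_{i\neq j}F_{ji}=\sum_{i\neq j}F_{ij}$, and (A2) $\alpha_i,\beta_i,\sigma_i,\delta_i>0$ and initial states in $[0,1]$ with $s_i+e_i+x_i+r_i=1$. Let $$U=\begin{bmatrix}-\Sigma-\Gamma+\Phi & B\\ \Sigma & -D-\Gamma+\Phi\end{bmatrix}\in\mathbb R^{2n\times 2n}.$$ If $s(U)<0$, then the healthy state $(s,e,x,r)=(\mathbf 1,\mathbf 0,\mathbf 0,\mathbf 0)$ is locally exponentially stable (for the dynamics on the invariant set where $s_i+e_i+x_i+r_i=1$ for all $i$, i.e. for the $(e,x,r)$ dynamics obtained by substituting $s=\mathbf 1-e-x-r$).
   Context: Model: $n$ sub-populations with sizes $N_i>0$; $F_{ij}\ge 0$ is the flow of individuals from $j$ to $i$ ($F_{ii}=0$); $\gamma_j=\sum_{i\ne j}F_{ij}/N_j$; $w_{ij}=F_{ij}/\sum_{l\neq j}F_{lj}$, $w_{ii}=0$. Dynamics in vector form: $\dot s=Ar-(BX+\Gamma)s+\Phi s$, $\dot e=BXs-(\Sigma+\Gamma)e+\Phi e$, $\dot x=\Sigma e-(D+\Gamma)x+\Phi x$, $\dot r=Dx-(A+\Gamma)r+\Phi r$, where $A=\mathrm{diag}(\alpha_i)$, $B=\mathrm{diag}(\beta_i)$, $\Sigma=\mathrm{diag}(\sigma_i)$, $D=\mathrm{diag}(\delta_i)$, $X=\mathrm{diag}(x_i)$, $\Gamma=\mathrm{diag}(\gamma_i)$,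 and $\Phi=N^{-1}W\Gamma N$ with $N=\mathrm{diag}(N_i)$, $W=(w_{ij})$ (so $\Phi_{ij}=\frac{N_j}{N_i}w_{ij}\gamma_j$). For a real square matrix $M$, $s(M)$ is the largest real part of its eigenvalues. *)

theory Defs
  imports "HOL-Analysis.Analysis"
begin

text \<open>Sub-populations are indexed by a finite type 'n (so n = CARD('n)).
  N i: population sizes, F i j: flow from j to i.\<close>

definition gam :: "('n::finite \<Rightarrow> real) \<Rightarrow> ('n \<Rightarrow> 'n \<Rightarrow> real) \<Rightarrow> 'n \<Rightarrow> real" where
  "gam N F j = (\<Sum>i\<in>UNIV - {j}. F i j) / N j"

definition wgt :: "('n::finite \<Rightarrow> 'n \<Rightarrow> real) \<Rightarrow> 'n \<Rightarrow> 'n \<Rightarrow> real" where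
  "wgt F i j = (if i = j then 0 else F i j / (\<Sum>l\<in>UNIV - {j}. F l j))"

text \<open>Phi = N^-1 W Gamma N, i.e. Phi i j = N j / N i * w i j * gamma j.\<close>
definition Phi :: "('n::finite \<Rightarrow> real) \<Rightarrow> ('n \<Rightarrow> 'n \<Rightarrow> real) \<Rightarrow> 'n \<Rightarrow> 'n \<Rightarrow> real" where
  "Phi N F i j = N j / N i * wgt F i j * gam N F j"

definition Umat :: "('n::finite \<Rightarrow> real) \<Rightarrow> ('n \<Rightarrow> 'n \<Rightarrow> real) \<Rightarrow> ('n \<Rightarrow> real) \<Rightarrow> ('n \<Rightarrow> real)
    \<Rightarrow> ('n \<Rightarrow> real) \<Rightarrow> real ^ ('n + 'n) ^ ('n + 'n)" where
  "Umat N F beta sig delta = (\<chi> p q.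
     (case (p, q) of
        (Inl i, Inl j) \<Rightarrow> (if i = j then - sig i - gam N F i else 0) + Phi N F i j
      | (Inl i, Inr j) \<Rightarrow> (if i = j then beta i else 0)
      | (Inr i, Inl j) \<Rightarrow> (if i = j then sig i else 0)
      | (Inr i, Inr j) \<Rightarrow> (if i = j then - delta i - gam N F i else 0) + Phi N F i j))"

definition spectral_abscissa :: "real ^ 'm ^ 'm \<Rightarrow> real" where
  "spectral_abscissa M =
     Max {Re z | z. det (mat z - (\<chi> i j. complex_of_real (M $ i $ j))) = 0}"

text \<open>Reduced (e,x,r) vector field obtained by substituting s = 1 - e - x - r.\<close>
definition seirs_field :: "('n::finite \<Rightarrow> real) \<Rightarrow> ('n \<Rightarrow> 'n \<Rightarrow> real) \<Rightarrow> ('n \<Rightarrow> real) \<Rightarrow> ('n \<Rightarrow> real)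
    \<Rightarrow> ('n \<Rightarrow> real) \<Rightarrow> ('n \<Rightarrow> real)
    \<Rightarrow> (real^'n) \<times> (real^'n) \<times> (real^'n) \<Rightarrow> (real^'n) \<times> (real^'n) \<times> (real^'n)" where
  "seirs_field N F alpha beta sig delta = (\<lambda>(e, x, r).
     (\<chi> i. beta i * x $ i * (1 - e $ i - x $ i - r $ i) - (sig i + gam N F i) * e $ i
             + (\<Sum>j\<in>UNIV. Phi N F i j * e $ j),
      \<chi> i. sig i * e $ i - (delta i + gam N F i) * x $ i + (\<Sum>j\<in>UNIV. Phi N F i j * x $ j),
      \<chi> i. delta i * x $ i - (alpha i + gam N F i) * r $ i + (\<Sum>j\<in>UNIV. Phi N F i j * r $ j)))"

definition admissible :: "(real^'n) \<times> (real^'n) \<times> (real^'n) \<Rightarrow> bool" where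
  "admissible = (\<lambda>(e, x, r). \<forall>i. 0 \<le> e $ i \<and> e $ i \<le> 1 \<and> 0 \<le> x $ i \<and> x $ i \<le> 1
       \<and> 0 \<le> r $ i \<and> r $ i \<le> 1 \<and> 0 \<le> 1 - e $ i - x $ i - r $ i \<and> 1 - e $ i - x $ i - r $ i \<le> 1)"

definition loc_exp_stable_origin :: "('a::real_normed_vector \<Rightarrow> 'a) \<Rightarrow> ('a \<Rightarrow> bool) \<Rightarrow> bool" where
  "loc_exp_stable_origin f P \<longleftrightarrow>
     (\<exists>d>0. \<exists>c>0. \<exists>lam>0. \<forall>T\<ge>0. \<forall>y::real \<Rightarrow> 'a.
        ((\<forall>t\<in>{0..T}. (y has_vector_derivative f (y t)) (at t within {0..T}))
          \<and> P (y 0) \<and> norm (y 0) < d)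
        \<longrightarrow> (\<forall>t\<in>{0..T}. norm (y t) \<le> c * exp (- lam * t) * norm (y 0)))"

end

theory Submission
  imports Defs "HOL-Computational_Algebra.Polynomial"
begin


lemma sum_UNIV_Plus: "(\<Sum>x\<in>(UNIV::('a::finite + 'b::finite) set). g x) = (\<Sum>i\<in>UNIV. g (Inl i)) + (\<Sum>i\<in>UNIV. g (Inr i))"
  by (subst UNIV_Plus_UNIV[symmetric], subst sum.Plus) (auto simp: o_def)

lemma det_nz_if_ker:
  fixes A :: "'a::field^'n^'n"
  assumes "\<And>x. A *v x = 0 \<Longrightarrow> x = 0"
  shows "det A \<noteq> 0"
  using assms invertible_det_nz invertible_left_inverse matrix_left_invertible_ker by blast

lemma det_charmat_nz_large:
  fixes M :: "'a::real_normed_field^'n^'n"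
  assumes big: "norm z > (\<Sum>i\<in>UNIV. \<Sum>j\<in>UNIV. norm (M$i$j))"
  shows "det (mat z - M) \<noteq> 0"
proof (rule det_nz_if_ker, rule ccontr)
  fix x :: "'a^'n"
  assume ker: "(mat z - M) *v x = 0" and nz: "x \<noteq> 0"
  define m where "m = Max (range (\<lambda>j. norm (x$j)))"
  have "m \<in> range (\<lambda>j. norm (x$j))" unfolding m_def by (rule Max_in) auto
  then obtain k where km: "m = norm (x$k)" by auto
  have k: "\<And>j. norm (x$j) \<le> norm (x$k)"
    unfolding km[symmetric] m_def by (rule Max_ge) auto
  have xk: "norm (x$k) > 0"
  proof -
    obtain j where "x$j \<noteq> 0" using nz by (metis vec_eq_iff zero_index)
    then have "norm (x$j) > 0" by simp
    then show ?thesis using k[of j] by linarith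
  qed
  have e1: "((mat z - M) *v x)$k = (\<Sum>j\<in>UNIV. mat z $k$j * x$j) - (\<Sum>j\<in>UNIV. M$k$j * x$j)"
    by (simp add: matrix_vector_mult_def left_diff_distrib sum_subtractf)
  have e2: "(\<Sum>j\<in>UNIV. mat z $k$j * x$j) = z * x$k"
  proof -
    have "(\<Sum>j\<in>UNIV. mat z $k$j * x$j) = (\<Sum>j\<in>UNIV. if k = j then z * x$j else 0)"
      by (rule sum.cong) (auto simp: mat_def)
    then show ?thesis by simp
  qed
  have eq: "z * x$k = (\<Sum>j\<in>UNIV. M$k$j * x$j)"
    using e1 e2 ker by simp
  have "norm z * norm (x$k) = norm (\<Sum>j\<in>UNIV. M$k$j * x$j)"
    by (metis eq norm_mult)
  also have "\<dots> \<le> (\<Sum>j\<in>UNIV. norm (M$k$j) * norm (x$k))"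
    by (rule order_trans[OF norm_sum], rule sum_mono) (simp add: norm_mult mult_left_mono k)
  also have "\<dots> = (\<Sum>j\<in>UNIV. norm (M$k$j)) * norm (x$k)"
    by (simp add: sum_distrib_right)
  also have "\<dots> \<le> (\<Sum>i\<in>UNIV. \<Sum>j\<in>UNIV. norm (M$i$j)) * norm (x$k)"
    by (rule mult_right_mono, rule member_le_sum[of k]) (auto intro: sum_nonneg)
  finally show False using big xk by (simp add: mult_le_cancel_right)
qed



definition cpoly :: "'a::comm_ring_1^'n^'n \<Rightarrow> 'a poly" where
  "cpoly M = (\<Sum>p\<in>{p. p permutes (UNIV::'n set)}. of_int (sign p) *
      (\<Prod>i\<in>UNIV. if p i = i then [:-(M$i$i), 1:] else [:-(M$i$(p i)):]))"

lemma poly_cpoly: "poly (cpoly M) z = det (mat z - M)"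
  unfolding cpoly_def det_def
  by (simp add: poly_sum poly_prod mat_def of_int_poly poly_monom cong: if_cong)
     (rule sum.cong, simp, rule arg_cong[where f="\<lambda>x. _ * x"], rule prod.cong, auto)

lemma finite_eig:
  fixes M :: "'a::real_normed_field^'n^'n"
  shows "finite {z. det (mat z - M) = 0}"
proof -
  let ?S = "(\<Sum>i\<in>UNIV. \<Sum>j\<in>UNIV. norm (M$i$j))"
  have "?S \<ge> 0" by (intro sum_nonneg) auto
  then have "norm (of_real (?S + 1) :: 'a) > ?S"
    by (subst norm_of_real, simp del: of_real_add of_real_sum)
  then have "poly (cpoly M) (of_real (?S+1)) \<noteq> 0"
    using det_charmat_nz_large poly_cpoly by metis
  then have "cpoly M \<noteq> 0" by auto
  from poly_roots_finite[OF this] show ?thesis unfolding poly_cpoly .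
qed

lemma det_of_real:
  fixes A :: "real^'n^'n"
  shows "det (\<chi> i j. (of_real (A$i$j) :: 'a::{real_algebra_1,comm_ring_1})) = of_real (det A)"
  unfolding det_def by (simp add: of_real_sum of_real_prod)

lemma sa_neg_det:
  fixes U :: "real^'n^'n"
  assumes "spectral_abscissa U < 0" "s \<ge> 0"
  shows "det (mat s - U) \<noteq> 0"
proof
  assume d: "det (mat s - U) = 0"
  let ?Mc = "(\<chi> i j. complex_of_real (U$i$j))"
  have "mat (complex_of_real s) - ?Mc = (\<chi> i j. complex_of_real ((mat s - U)$i$j))"
    by (simp add: vec_eq_iff mat_def)
  then have "det (mat (complex_of_real s) - ?Mc) = 0"
    using d det_of_real[of "mat s - U"] by simp
  then have s_in: "s \<in> {Re z | z. det (mat z - ?Mc) = 0}" by force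
  have eq: "{Re z | z. det (mat z - ?Mc) = 0} = Re ` {z. det (mat z - ?Mc) = 0}"
    by auto
  have fin: "finite {Re z | z. det (mat z - ?Mc) = 0}"
    unfolding eq using finite_eig[of ?Mc] by (rule finite_imageI)
  have "s \<le> spectral_abscissa U"
    unfolding spectral_abscissa_def by (rule Max_ge[OF fin s_in])
  then show False using assms by simp
qed



lemma det_cont:
  assumes "\<And>i j. continuous_on S (f i j)"
  shows "continuous_on S (\<lambda>s. det (\<chi> i j. (f i j s :: real)))"
  unfolding det_def vec_lambda_beta by (intro continuous_intros assms)

lemma Min_cont:
  fixes f :: "'k \<Rightarrow> real \<Rightarrow> real"
  assumes "finite K" "K \<noteq> {}" "\<And>k. k \<in> K \<Longrightarrow> continuous_on S (f k)"
  shows "continuous_on S (\<lambda>s. Min ((\<lambda>k. f k s) ` K))"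
  using assms
proof (induction K rule: finite_ne_induct)
  case (singleton x)
  then show ?case by simp
next
  case (insert x F)
  have "continuous_on S (\<lambda>s. min (f x s) (Min ((\<lambda>k. f k s) ` F)))"
    using insert by (intro continuous_intros) auto
  then show ?case using insert by simp
qed

lemma mmatrix:
  fixes U :: "real^'m^'m"
  assumes off: "\<And>i j. i \<noteq> j \<Longrightarrow> U$i$j \<ge> 0"
    and nz: "\<And>s. s \<ge> 0 \<Longrightarrow> det (mat s - U) \<noteq> 0"
  shows "\<exists>w. (\<forall>j. w$j > 0) \<and> (\<forall>j. (\<Sum>i\<in>UNIV. w$i * U$i$j) = -1)"
proof -
  define A where "A s = (\<chi> i j. (if i = j then s else 0) - U$j$i)" for s :: real
  have At: "A s = transpose (mat s - U)" for s
    unfolding A_def by (simp add: vec_eq_iff transpose_def mat_def)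
  have detA: "det (A s) \<noteq> 0" if "s \<ge> 0" for s
    using nz[OF that] by (simp add: At)
  define w where "w s = (\<chi> k. det (\<chi> i j. if j = k then 1 else A s $i$j) / det (A s))" for s
  have sol: "A s *v w s = 1" if "s \<ge> 0" for s
  proof -
    have "w s = (\<chi> k. det (\<chi> i j. if j = k then (1::real^'m)$i else A s $i$j) / det (A s))"
      unfolding w_def by (simp only: one_index)
    then show ?thesis using cramer[OF detA[OF that], of "w s" 1] by blast
  qed
  have comp: "s * w s $k - (\<Sum>i\<in>UNIV. U$i$k * w s $i) = 1" if "s \<ge> 0" for s k
  proof -
    have "(A s *v w s)$k = 1" using sol[OF that] by simp
    moreover have "(A s *v w s)$k = (\<Sum>j\<in>UNIV. ((if k = j then s else 0) - U$j$k) * w s $ j)"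
      unfolding A_def matrix_vector_mult_def vec_lambda_beta by (rule refl)
    moreover have "\<dots> = (\<Sum>j\<in>UNIV. (if k = j then s * w s $ j else 0) - U$j$k * w s $ j)"
      by (rule sum.cong) (auto simp: algebra_simps)
    moreover have "\<dots> = s * w s $ k - (\<Sum>j\<in>UNIV. U$j$k * w s $j)"
      by (simp add: sum_subtractf)
    ultimately show ?thesis by simp
  qed
  have cont: "continuous_on {0..} (\<lambda>s. w s $ k)" for k
  proof -
    have c1: "continuous_on {0..} (\<lambda>s. det (\<chi> i j. if j = k then 1 else A s $i$j))"
      unfolding A_def vec_lambda_beta
      apply (rule det_cont)
      subgoal for i j by (cases "j = k"; cases "i = j") (auto intro!: continuous_intros)
      done
    have c2: "continuous_on {0..} (\<lambda>s. det (A s))"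
      unfolding A_def vec_lambda_beta
      apply (rule det_cont)
      subgoal for i j by (cases "i = j") (auto intro!: continuous_intros)
      done
    show ?thesis unfolding w_def vec_lambda_beta
      by (intro continuous_intros c1 c2) (use detA in auto)
  qed
  have pos: "w s $ k > 0" if s0: "s \<ge> 0" and nn: "\<forall>k. w s $ k \<ge> 0" for s k
  proof -
    have "(\<Sum>i\<in>UNIV. U$i$k * w s $i) = U$k$k * w s $k + (\<Sum>i\<in>UNIV - {k}. U$i$k * w s $i)"
      by (simp add: sum.remove)
    moreover have "(\<Sum>i\<in>UNIV - {k}. U$i$k * w s $i) \<ge> 0"
      using off nn by (intro sum_nonneg) auto
    ultimately have "(s - U$k$k) * w s $k \<ge> 1" using comp[OF s0, of k] by (simp add: algebra_simps)
    then have "w s $ k \<noteq> 0" by auto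
    then show ?thesis using nn[rule_format, of k] by linarith
  qed
  define S where "S = 1 + (\<Sum>i\<in>UNIV. \<Sum>j\<in>UNIV. \<bar>U$i$j\<bar>)"
  have S0: "S \<ge> 0" unfolding S_def by (simp add: add_nonneg_nonneg sum_nonneg)
  have large: "\<forall>k. w S $ k \<ge> 0"
  proof (rule ccontr)
    assume "\<not> (\<forall>k. w S $ k \<ge> 0)"
    define m where "m = Min (range (\<lambda>j. w S $ j))"
    have "m \<in> range (\<lambda>j. w S $ j)" unfolding m_def by (rule Min_in) auto
    then obtain kk where km: "m = w S $ kk" by auto
    have kk: "\<And>j. w S $ kk \<le> w S $ j"
      unfolding km[symmetric] m_def by (rule Min_le) auto
    have neg: "w S $ kk < 0" using \<open>\<not> (\<forall>k. w S $ k \<ge> 0)\<close> kk by (meson not_le order_le_less_trans)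
    have "(\<Sum>i\<in>UNIV. U$i$kk * w S $ kk) \<le> (\<Sum>i\<in>UNIV. U$i$kk * w S $i)"
    proof (rule sum_mono)
      fix i show "U$i$kk * w S $ kk \<le> U$i$kk * w S $i"
        using off[of i kk] kk[of i] by (cases "i = kk") (auto intro: mult_left_mono)
    qed
    then have "(\<Sum>i\<in>UNIV. U$i$kk) * w S $ kk \<le> (\<Sum>i\<in>UNIV. U$i$kk * w S $i)"
      by (simp add: sum_distrib_right)
    moreover have "(S - (\<Sum>i\<in>UNIV. U$i$kk)) * w S $ kk = S * w S $ kk - (\<Sum>i\<in>UNIV. U$i$kk) * w S $ kk"
      by (simp add: left_diff_distrib)
    ultimately have "1 \<le> (S - (\<Sum>i\<in>UNIV. U$i$kk)) * w S $ kk"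
      using comp[OF S0, of kk] by linarith
    moreover have "(\<Sum>i\<in>UNIV. U$i$kk) \<le> (\<Sum>i\<in>UNIV. \<Sum>j\<in>UNIV. \<bar>U$i$j\<bar>)"
    proof -
      have "(\<Sum>i\<in>UNIV. U$i$kk) \<le> (\<Sum>i\<in>UNIV. \<bar>U$i$kk\<bar>)" by (rule sum_mono) simp
      also have "\<dots> \<le> (\<Sum>i\<in>UNIV. \<Sum>j\<in>UNIV. \<bar>U$i$j\<bar>)"
        by (rule sum_mono, rule member_le_sum) auto
      finally show ?thesis .
    qed
    then have "S - (\<Sum>i\<in>UNIV. U$i$kk) > 0" unfolding S_def by linarith
    ultimately show False using neg by (smt (verit) mult_pos_neg)
  qed
  define mf where "mf s = Min (range (\<lambda>k. w s $ k))" for s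
  have mfc: "continuous_on {0..S} mf"
    unfolding mf_def
    by (rule Min_cont, simp, simp, rule continuous_on_subset[OF cont]) auto
  have mf_ge: "mf s \<le> w s $ k" for s k unfolding mf_def by (rule Min_le) auto
  have mf_in: "\<exists>k. mf s = w s $ k" for s
  proof -
    have "mf s \<in> range (\<lambda>k. w s $ k)" unfolding mf_def by (rule Min_in) auto
    then show ?thesis by auto
  qed
  have w0: "\<forall>k. w 0 $ k \<ge> 0"
  proof (rule ccontr)
    assume "\<not> (\<forall>k. w 0 $ k \<ge> 0)"
    then obtain k where "w 0 $ k < 0" by (auto simp: not_le)
    then have "mf 0 \<le> 0" using mf_ge[of 0 k] by linarith
    moreover have "0 \<le> mf S" using mf_in[of S] large by force
    ultimately obtain s where s: "0 \<le> s" "s \<le> S" "mf s = 0"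
      using IVT'[of mf 0 0 S] mfc S0 by auto
    then have "\<forall>k. w s $ k \<ge> 0" using mf_ge[of s] by (metis)
    then have "\<forall>k. w s $ k > 0" using pos s(1) by blast
    then show False using mf_in[of s] s(3) by (metis less_irrefl)
  qed
  have wpos: "\<forall>j. w 0 $ j > 0" using pos[OF _ w0] by simp
  have "(\<Sum>i\<in>UNIV. w 0 $ i * U$i$j) = -1" for j
    using comp[of 0 j] by (simp add: mult.commute)
  then show ?thesis using wpos by blast
qed



lemma comparison:
  fixes V :: "real \<Rightarrow> real"
  assumes cont: "continuous_on {0..T} V"
    and bb: "0 < b" "b < b'"
    and dini: "\<And>t \<eta>. t \<in> {0..<T} \<Longrightarrow> V t \<le> R \<Longrightarrow> \<eta> > 0 \<Longrightarrow>
        eventually (\<lambda>s. V s \<le> V t - (s - t) * (b' * V t - \<eta>)) (at_right t)"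
    and E: "V 0 < E" "E \<le> R" and V0: "V 0 \<ge> 0"
    and t0: "t0 \<in> {0..T}"
  shows "V t0 \<le> E * exp (- b * t0)"
proof (rule ccontr)
  define \<psi> where "\<psi> t = E * exp (- b * t)" for t
  assume "\<not> V t0 \<le> E * exp (- b * t0)"
  then have t0A: "V t0 > \<psi> t0" unfolding \<psi>_def by simp
  define A where "A = {t\<in>{0..T}. V t > \<psi> t}"
  define t1 where "t1 = Inf A"
  have Ane: "A \<noteq> {}" using t0 t0A A_def by blast
  have bdd: "bdd_below A" unfolding A_def by (rule bdd_belowI[of _ 0]) auto
  have lower: "t1 \<le> a" if "a \<in> A" for a unfolding t1_def by (rule cInf_lower[OF that bdd])
  have t1_0: "t1 \<ge> 0" unfolding t1_def by (rule cInf_greatest[OF Ane]) (auto simp: A_def)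
  have t1_t0: "t1 \<le> t0" using lower t0 t0A A_def by blast
  have t1_T: "t1 \<le> T" using t1_t0 t0 by auto
  have E0: "E > 0" using E(1) V0 by simp
  have below: "V s \<le> \<psi> s" if "s \<in> {0..T}" "s < t1" for s
    using lower[of s] that A_def by force
  define g where "g t = V t - \<psi> t" for t
  have gc: "continuous_on {0..T} g"
    unfolding g_def \<psi>_def by (intro continuous_intros cont)
  note gce = gc[unfolded continuous_on_iff, rule_format]
  have t1S: "t1 \<in> {0..T}" using t1_0 t1_T by auto
  have ge: "g t1 \<ge> 0"
  proof (rule ccontr)
    assume "\<not> g t1 \<ge> 0"
    then obtain d where d: "d > 0" "\<And>x'. x' \<in> {0..T} \<Longrightarrow> dist x' t1 < d \<Longrightarrow> dist (g x') (g t1) < - g t1"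
      using gce[OF t1S, of "- g t1"] by auto
    have "t1 + d \<le> a" if "a \<in> A" for a
    proof (rule ccontr)
      assume "\<not> t1 + d \<le> a"
      moreover have "t1 \<le> a" using lower that .
      moreover have "a \<in> {0..T}" "g a > 0" using that unfolding A_def g_def by auto
      ultimately show False using d(2)[of a] \<open>\<not> g t1 \<ge> 0\<close> by (auto simp: dist_real_def)
    qed
    then have "t1 + d \<le> t1" unfolding t1_def by (intro cInf_greatest[OF Ane]) (auto simp: t1_def)
    then show False using d by simp
  qed
  have le: "g t1 \<le> 0"
  proof (rule ccontr)
    assume gpos: "\<not> g t1 \<le> 0"
    show False
    proof (cases "t1 = 0")
      case True
      then show ?thesis using gpos E(1) unfolding g_def \<psi>_def by simp
    next
      case False
      then have t1p: "t1 > 0" using t1_0 by simp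
      obtain d where d: "d > 0" "\<And>x'. x' \<in> {0..T} \<Longrightarrow> dist x' t1 < d \<Longrightarrow> dist (g x') (g t1) < g t1"
        using gce[OF t1S, of "g t1"] gpos by auto
      define s where "s = max 0 (t1 - d/2)"
      have sS: "s \<in> {0..T}" "s < t1" "dist s t1 < d" using t1p t1_T d(1) by (auto simp: s_def dist_real_def)
      then have "g s > 0" using d(2)[of s] by (auto simp: dist_real_def)
      moreover have "g s \<le> 0" using below[OF sS(1,2)] unfolding g_def by simp
      ultimately show False by simp
    qed
  qed
  have eq: "V t1 = \<psi> t1" using ge le unfolding g_def by simp
  have t1T: "t1 < T"
  proof (rule ccontr)
    assume "\<not> t1 < T"
    then have "t0 = t1" using t1_t0 t0 t1_T by auto
    then show False using eq t0A by simp
  qed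
  have psi_pos: "\<psi> t1 > 0" unfolding \<psi>_def using E0 by simp
  have psi_R: "\<psi> t1 \<le> R"
  proof -
    have "exp (- b * t1) \<le> 1" using bb t1_0 by simp
    then have "\<psi> t1 \<le> E" unfolding \<psi>_def using E0 by (simp add: mult_left_le)
    then show ?thesis using E by simp
  qed
  define \<eta> where "\<eta> = (b' - b) * V t1 / 2"
  have eta: "\<eta> > 0" unfolding \<eta>_def using eq psi_pos bb by simp
  have "eventually (\<lambda>s. V s \<le> V t1 - (s - t1) * (b' * V t1 - \<eta>)) (at_right t1)"
    using dini[of t1 \<eta>] t1_0 t1T eq psi_R eta by auto
  then obtain h where h: "h > t1" "\<And>s. s > t1 \<Longrightarrow> s < h \<Longrightarrow> V s \<le> V t1 - (s - t1) * (b' * V t1 - \<eta>)"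
    unfolding eventually_at_right_field by blast
  have notA: "s \<notin> A" if "s > t1" "s < h" for s
  proof -
    have "exp (- b * s) = exp (- b * t1) * exp (- b * (s - t1))"
      by (simp add: exp_add[symmetric] algebra_simps)
    moreover have "exp (- b * (s - t1)) \<ge> 1 - b * (s - t1)"
      using exp_ge_add_one_self[of "- b * (s - t1)"] by simp
    ultimately have "\<psi> s \<ge> \<psi> t1 * (1 - b * (s - t1))"
      unfolding \<psi>_def using E0 by (simp add: mult_left_mono)
    moreover have "V s < \<psi> t1 * (1 - b * (s - t1))"
    proof -
      have "V s \<le> \<psi> t1 - (s - t1) * (b' * \<psi> t1 - (b' - b) * \<psi> t1 / 2)"
        using h(2)[OF that] eq unfolding \<eta>_def by simp
      moreover have "(s - t1) * ((b' - b) * \<psi> t1 / 2) > 0"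
        using that bb psi_pos by simp
      moreover have "(s - t1) * (b' * \<psi> t1 - (b' - b) * \<psi> t1 / 2) = b * ((s - t1) * \<psi> t1) + (s - t1) * ((b' - b) * \<psi> t1 / 2)"
        by (simp add: algebra_simps)
      moreover have "\<psi> t1 * (1 - b * (s - t1)) = \<psi> t1 - b * ((s - t1) * \<psi> t1)"
        by (simp add: algebra_simps)
      ultimately show ?thesis by linarith
    qed
    ultimately show ?thesis unfolding A_def by simp
  qed
  have "h \<le> a" if "a \<in> A" for a
  proof (rule ccontr)
    assume "\<not> h \<le> a"
    moreover have "a \<noteq> t1" using that eq unfolding A_def by auto
    moreover have "t1 \<le> a" using lower that .
    ultimately show False using notA[of a] that by auto
  qed
  then have "h \<le> t1" unfolding t1_def by (intro cInf_greatest[OF Ane]) auto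
  then show False using h by simp
qed



lemma abs_step:
  fixes z z' L h :: real
  assumes "h \<ge> 0" "1 + h * L \<ge> 0"
  shows "\<bar>z + h * z'\<bar> \<le> \<bar>z\<bar> + h * (\<bar>z' - L * z\<bar> + L * \<bar>z\<bar>)"
proof -
  have "z + h * z' = (1 + h * L) * z + h * (z' - L * z)" by (simp add: algebra_simps)
  then have "\<bar>z + h * z'\<bar> \<le> \<bar>(1 + h * L) * z\<bar> + \<bar>h * (z' - L * z)\<bar>"
    by (metis abs_triangle_ineq)
  also have "\<dots> = (1 + h * L) * \<bar>z\<bar> + h * \<bar>z' - L * z\<bar>"
    using assms by (simp add: abs_mult)
  also have "\<dots> = \<bar>z\<bar> + h * (\<bar>z' - L * z\<bar> + L * \<bar>z\<bar>)" by (simp add: algebra_simps)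
  finally show ?thesis .
qed

lemma sum_skip:
  fixes g :: "'k::finite \<Rightarrow> real"
  shows "(\<Sum>j\<in>UNIV. if j = k then 0 else g j) = (\<Sum>j\<in>UNIV. g j) - g k"
proof -
  have "(\<Sum>j\<in>UNIV. g j) = g k + (\<Sum>j\<in>UNIV - {k}. g j)" by (simp add: sum.remove)
  moreover have "(\<Sum>j\<in>UNIV. if j = k then 0 else g j) = 0 + (\<Sum>j\<in>UNIV - {k}. if j = k then 0 else g j)"
    by (subst sum.remove[of UNIV k]) auto
  moreover have "(\<Sum>j\<in>UNIV - {k}. if j = k then 0 else g j) = (\<Sum>j\<in>UNIV - {k}. g j)"
    by (rule sum.cong) auto
  ultimately show ?thesis by simp
qed

lemma state_bound:
  fixes cmp :: "'a \<Rightarrow> 'k::finite \<Rightarrow> real"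
  assumes fL: "\<And>k. cmp FY k = (\<Sum>j\<in>UNIV. L k j * cmp Y j) + nl k"
    and Loff: "\<And>k j. k \<noteq> j \<Longrightarrow> L k j \<ge> 0"
    and vpos: "\<And>k. v k > 0"
    and col: "\<And>j. (\<Sum>k\<in>UNIV. v k * L k j) \<le> - a * v j"
    and nlb: "\<And>k. \<bar>nl k\<bar> \<le> B"
  shows "(\<Sum>k\<in>UNIV. v k * (\<bar>cmp FY k - L k k * cmp Y k\<bar> + L k k * \<bar>cmp Y k\<bar>))
      \<le> - a * (\<Sum>k\<in>UNIV. v k * \<bar>cmp Y k\<bar>) + (\<Sum>k\<in>UNIV. v k) * B"
proof -
  have Dk: "\<bar>cmp FY k - L k k * cmp Y k\<bar> + L k k * \<bar>cmp Y k\<bar> \<le> (\<Sum>j\<in>UNIV. L k j * \<bar>cmp Y j\<bar>) + B" for k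
  proof -
    have "cmp FY k - L k k * cmp Y k = (\<Sum>j\<in>UNIV. if j = k then 0 else L k j * cmp Y j) + nl k"
      using fL[of k] sum_skip[of k "\<lambda>j. L k j * cmp Y j"] by simp
    then have "\<bar>cmp FY k - L k k * cmp Y k\<bar> \<le> \<bar>\<Sum>j\<in>UNIV. if j = k then 0 else L k j * cmp Y j\<bar> + \<bar>nl k\<bar>"
      by (metis abs_triangle_ineq)
    also have "\<bar>\<Sum>j\<in>UNIV. if j = k then 0 else L k j * cmp Y j\<bar> \<le> (\<Sum>j\<in>UNIV. if j = k then 0 else L k j * \<bar>cmp Y j\<bar>)"
      by (rule order_trans[OF sum_abs], rule sum_mono) (use Loff in \<open>auto simp: abs_mult\<close>)
    also have "(\<Sum>j\<in>UNIV. if j = k then 0 else L k j * \<bar>cmp Y j\<bar>) = (\<Sum>j\<in>UNIV. L k j * \<bar>cmp Y j\<bar>) - L k k * \<bar>cmp Y k\<bar>"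
      by (rule sum_skip)
    finally show ?thesis using nlb[of k] by simp
  qed
  have "(\<Sum>k\<in>UNIV. v k * (\<bar>cmp FY k - L k k * cmp Y k\<bar> + L k k * \<bar>cmp Y k\<bar>))
      \<le> (\<Sum>k\<in>UNIV. v k * ((\<Sum>j\<in>UNIV. L k j * \<bar>cmp Y j\<bar>) + B))"
    by (rule sum_mono, rule mult_left_mono[OF Dk]) (use vpos in \<open>simp add: less_imp_le\<close>)
  also have "\<dots> = (\<Sum>j\<in>UNIV. (\<Sum>k\<in>UNIV. v k * L k j) * \<bar>cmp Y j\<bar>) + (\<Sum>k\<in>UNIV. v k) * B"
  proof -
    have e1: "(\<Sum>k\<in>UNIV. v k * ((\<Sum>j\<in>UNIV. L k j * \<bar>cmp Y j\<bar>) + B))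
        = (\<Sum>k\<in>UNIV. \<Sum>j\<in>UNIV. v k * (L k j * \<bar>cmp Y j\<bar>)) + (\<Sum>k\<in>UNIV. v k) * B"
      by (simp only: distrib_left sum.distrib sum_distrib_left sum_distrib_right)
    have e2: "(\<Sum>k\<in>UNIV. \<Sum>j\<in>UNIV. v k * (L k j * \<bar>cmp Y j\<bar>)) = (\<Sum>j\<in>UNIV. \<Sum>k\<in>UNIV. v k * (L k j * \<bar>cmp Y j\<bar>))"
      by (rule sum.swap)
    have e3: "(\<Sum>j\<in>UNIV. \<Sum>k\<in>UNIV. v k * (L k j * \<bar>cmp Y j\<bar>)) = (\<Sum>j\<in>UNIV. (\<Sum>k\<in>UNIV. v k * L k j) * \<bar>cmp Y j\<bar>)"
      by (simp only: sum_distrib_right mult.assoc)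
    show ?thesis using e1 e2 e3 by simp
  qed
  also have "\<dots> \<le> (\<Sum>j\<in>UNIV. (- a * v j) * \<bar>cmp Y j\<bar>) + (\<Sum>k\<in>UNIV. v k) * B"
    by (rule add_right_mono, rule sum_mono, rule mult_right_mono[OF col]) simp
  also have "\<dots> = - a * (\<Sum>k\<in>UNIV. v k * \<bar>cmp Y k\<bar>) + (\<Sum>k\<in>UNIV. v k) * B"
    by (simp add: sum_distrib_left mult.assoc)
  finally show ?thesis .
qed



lemma generic_stab:
  fixes f :: "'a::real_normed_vector \<Rightarrow> 'a" and cmp :: "'a \<Rightarrow> 'k::finite \<Rightarrow> real"
  assumes bl: "\<And>k. bounded_linear (\<lambda>Y. cmp Y k)"
    and nle: "\<And>Y. norm Y \<le> (\<Sum>k\<in>UNIV. \<bar>cmp Y k\<bar>)"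
    and cle: "\<And>Y k. \<bar>cmp Y k\<bar> \<le> norm Y"
    and fL: "\<And>Y k. cmp (f Y) k = (\<Sum>j\<in>UNIV. L k j * cmp Y j) + nl Y k"
    and Loff: "\<And>k j. k \<noteq> j \<Longrightarrow> L k j \<ge> 0"
    and vpos: "\<And>k. v k > 0" and apos: "a > 0"
    and col: "\<And>j. (\<Sum>k\<in>UNIV. v k * L k j) \<le> - a * v j"
    and K: "K \<ge> 0" and nlb: "\<And>Y k. \<bar>nl Y k\<bar> \<le> K * (\<Sum>j\<in>UNIV. \<bar>cmp Y j\<bar>)^2"
  shows "loc_exp_stable_origin f P"
proof -
  define VV where "VV Y = (\<Sum>k\<in>UNIV. v k * \<bar>cmp Y k\<bar>)" for Y
  define WW where "WW Y = (\<Sum>k\<in>UNIV. \<bar>cmp Y k\<bar>)" for Y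
  define vs where "vs = (\<Sum>k\<in>UNIV. v k)"
  define vmin where "vmin = Min (range v)"
  have "vmin \<in> range v" unfolding vmin_def by (rule Min_in) auto
  then have vmin_pos: "vmin > 0" using vpos by auto
  have vmin_le: "vmin \<le> v k" for k unfolding vmin_def by (rule Min_le) auto
  have vs_pos: "vs > 0" unfolding vs_def using vpos by (simp add: sum_pos)
  have VV0: "VV Y \<ge> 0" for Y unfolding VV_def using vpos by (simp add: sum_nonneg less_imp_le)
  have WW0: "WW Y \<ge> 0" for Y unfolding WW_def by (simp add: sum_nonneg)
  have WV: "vmin * WW Y \<le> VV Y" for Y
    unfolding VV_def WW_def sum_distrib_left
    by (rule sum_mono, rule mult_right_mono[OF vmin_le]) simp
  have WV': "WW Y \<le> VV Y / vmin" for Y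
    using WV[of Y] vmin_pos by (simp add: field_simps)
  have VW: "VV Y \<le> vs * norm Y" for Y
    unfolding VV_def vs_def sum_distrib_right
    by (rule sum_mono, rule mult_left_mono[OF cle]) (use vpos in \<open>simp add: less_imp_le\<close>)
  define C where "C = vs * K"
  have C0: "C \<ge> 0" unfolding C_def using vs_pos K by simp
  define R where "R = a * vmin^2 / (2*C + 2)"
  have Rpos: "R > 0" unfolding R_def using apos vmin_pos C0 by simp
  have CR: "C * R \<le> (a/2) * vmin^2"
  proof -
    have "C * R = (a * vmin^2) * (C / (2*C+2))" unfolding R_def by (simp add: field_simps)
    also have "\<dots> \<le> (a * vmin^2) * (1/2)"
      by (rule mult_left_mono) (use C0 apos vmin_pos in \<open>auto simp: field_simps\<close>)
    finally show ?thesis by simp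
  qed
  have key: "(\<Sum>k\<in>UNIV. v k * (\<bar>cmp (f Y) k - L k k * cmp Y k\<bar> + L k k * \<bar>cmp Y k\<bar>)) \<le> - (a/2) * VV Y"
    if VR: "VV Y \<le> R" for Y
  proof -
    have sb: "(\<Sum>k\<in>UNIV. v k * (\<bar>cmp (f Y) k - L k k * cmp Y k\<bar> + L k k * \<bar>cmp Y k\<bar>))
      \<le> - a * VV Y + vs * (K * (WW Y)^2)"
      unfolding VV_def vs_def WW_def
      by (rule state_bound[where nl="nl Y"], rule fL, rule Loff, assumption, rule vpos, rule col, rule nlb)
    have "(WW Y)^2 \<le> (VV Y / vmin)^2" by (rule power_mono[OF WV' WW0])
    then have "C * (WW Y)^2 \<le> C * (VV Y / vmin)^2" using C0 by (rule mult_left_mono)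
    also have "\<dots> = (C * VV Y) * VV Y / vmin^2" by (simp add: power2_eq_square)
    also have "\<dots> \<le> (C * R) * VV Y / vmin^2"
      using VR C0 VV0[of Y] vmin_pos by (intro divide_right_mono mult_right_mono mult_left_mono) auto
    also have "\<dots> \<le> ((a/2) * vmin^2) * VV Y / vmin^2"
      using CR VV0[of Y] vmin_pos by (intro divide_right_mono mult_right_mono) auto
    also have "\<dots> = (a/2) * VV Y" using vmin_pos by simp
    finally have "C * (WW Y)^2 \<le> (a/2) * VV Y" .
    then show ?thesis using sb unfolding C_def by (simp add: mult.assoc)
  qed
  define h0 where "h0 = 1 / (1 + (\<Sum>k\<in>UNIV. \<bar>L k k\<bar>))"
  have Ls0: "(\<Sum>k\<in>UNIV. \<bar>L k k\<bar>) \<ge> 0" by (simp add: sum_nonneg)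
  have Lp: "1 + (\<Sum>k\<in>UNIV. \<bar>L k k\<bar>) > 0" using Ls0 by linarith
  have h0pos: "h0 > 0" unfolding h0_def using Lp by simp
  have h0L: "1 + hh * L k k \<ge> 0" if "0 \<le> hh" "hh < h0" for hh k
  proof -
    have "\<bar>L k k\<bar> \<le> (\<Sum>k\<in>UNIV. \<bar>L k k\<bar>)" by (rule member_le_sum) auto
    then have "hh * \<bar>L k k\<bar> \<le> hh * (1 + (\<Sum>k\<in>UNIV. \<bar>L k k\<bar>))" using that by (simp add: mult_left_mono)
    also have "\<dots> \<le> h0 * (1 + (\<Sum>k\<in>UNIV. \<bar>L k k\<bar>))"
      using that Lp by (intro mult_right_mono) auto
    also have "\<dots> = 1" unfolding h0_def using Lp by simp
    finally have "hh * \<bar>L k k\<bar> \<le> 1" .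
    moreover have "- (hh * \<bar>L k k\<bar>) \<le> hh * L k k" using mult_left_mono[of "- \<bar>L k k\<bar>" "L k k" hh] that by simp
    ultimately show ?thesis by simp
  qed
  define d where "d = R / (2 * vs)"
  have dpos: "d > 0" unfolding d_def using Rpos vs_pos by simp
  define lam where "lam = a / 4"
  define c where "c = vs / vmin"
  have cpos: "c > 0" unfolding c_def using vs_pos vmin_pos by simp
  have lampos: "lam > 0" unfolding lam_def using apos by simp
  show ?thesis
    unfolding loc_exp_stable_origin_def
  proof (rule exI[of _ d], rule conjI[OF dpos], rule exI[of _ c], rule conjI[OF cpos],
      rule exI[of _ lam], rule conjI[OF lampos], intro allI impI ballI)
    fix T :: real and y :: "real \<Rightarrow> 'a" and t
    assume T: "T \<ge> 0"
      and H: "(\<forall>t\<in>{0..T}. (y has_vector_derivative f (y t)) (at t within {0..T})) \<and> P (y 0) \<and> norm (y 0) < d"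
      and t: "t \<in> {0..T}"
    have der: "(y has_vector_derivative f (y s)) (at s within {0..T})" if "s \<in> {0..T}" for s
      using H that by blast
    have ny0: "norm (y 0) < d" using H by blast
    have ycont: "continuous_on {0..T} y"
      unfolding continuous_on_eq_continuous_within
      using der has_vector_derivative_continuous by blast
    define V where "V s = VV (y s)" for s
    have Vcont: "continuous_on {0..T} V"
      unfolding V_def VV_def
      by (intro continuous_intros bounded_linear.continuous_on[OF bl ycont])
    have V0R: "V 0 < R / 2"
    proof -
      have "V 0 \<le> vs * norm (y 0)" unfolding V_def by (rule VW)
      also have "\<dots> < vs * d" using ny0 vs_pos by simp
      also have "\<dots> = R / 2" unfolding d_def using vs_pos by simp
      finally show ?thesis .
    qed
    have dini: "eventually (\<lambda>s. V s \<le> V t' - (s - t') * ((a/2) * V t' - \<eta>)) (at_right t')"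
      if t': "t' \<in> {0..<T}" and VtR: "V t' \<le> R" and eta: "\<eta> > 0" for t' \<eta>
    proof -
      have "(y has_vector_derivative f (y t')) (at t' within {t'..T})"
        by (rule has_vector_derivative_within_subset[OF der]) (use t' in auto)
      then have dr: "(y has_vector_derivative f (y t')) (at_right t')"
        using t' by (simp add: at_within_Icc_at_right)
      define \<eta>1 where "\<eta>1 = \<eta> / vs"
      have eta1: "\<eta>1 > 0" unfolding \<eta>1_def using eta vs_pos by simp
      have ev1: "eventually (\<lambda>s. \<forall>k. dist ((cmp (y s) k - cmp (y t') k) / (s - t')) (cmp (f (y t')) k) < \<eta>1) (at_right t')"
      proof (rule eventually_all_finite)
        fix k
        have "((\<lambda>s. cmp (y s) k) has_vector_derivative cmp (f (y t')) k) (at_right t')"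
          by (rule bounded_linear.has_vector_derivative[OF bl dr])
        then have "((\<lambda>s. cmp (y s) k) has_field_derivative cmp (f (y t')) k) (at_right t')"
          by (simp add: has_real_derivative_iff_has_vector_derivative)
        then have "((\<lambda>s. (cmp (y s) k - cmp (y t') k) / (s - t')) \<longlongrightarrow> cmp (f (y t')) k) (at_right t')"
          by (simp add: has_field_derivative_iff)
        then show "eventually (\<lambda>s. dist ((cmp (y s) k - cmp (y t') k) / (s - t')) (cmp (f (y t')) k) < \<eta>1) (at_right t')"
          using eta1 by (rule tendstoD)
      qed
      have ev2: "eventually (\<lambda>s. t' < s) (at_right t')" by (rule eventually_at_right_less)
      have ev3: "eventually (\<lambda>s. s < t' + h0) (at_right t')"
        unfolding eventually_at_right_field using h0pos by (intro exI[of _ "t' + h0"]) auto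
      show ?thesis
        using ev1 ev2 ev3
      proof eventually_elim
        case (elim s)
        define hh where "hh = s - t'"
        have hh: "hh > 0" "hh < h0" using elim unfolding hh_def by auto
        define D where "D k = \<bar>cmp (f (y t')) k - L k k * cmp (y t') k\<bar> + L k k * \<bar>cmp (y t') k\<bar>" for k
        have comp: "\<bar>cmp (y s) k\<bar> \<le> \<bar>cmp (y t') k\<bar> + hh * (D k + \<eta>1)" for k
        proof -
          have "\<bar>(cmp (y s) k - cmp (y t') k) / hh - cmp (f (y t')) k\<bar> < \<eta>1"
            using elim(1) unfolding hh_def dist_real_def by blast
          then have "\<bar>(cmp (y s) k - cmp (y t') k) / hh - cmp (f (y t')) k\<bar> * hh < \<eta>1 * hh"
            using hh by (simp add: mult_strict_right_mono)
          moreover have "\<bar>(cmp (y s) k - cmp (y t') k) / hh - cmp (f (y t')) k\<bar> * hh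
              = \<bar>((cmp (y s) k - cmp (y t') k) / hh - cmp (f (y t')) k) * hh\<bar>"
            using hh by (simp add: abs_mult)
          moreover have "((cmp (y s) k - cmp (y t') k) / hh - cmp (f (y t')) k) * hh
              = cmp (y s) k - cmp (y t') k - hh * cmp (f (y t')) k"
            using hh by (simp add: field_simps)
          ultimately have e1: "\<bar>cmp (y s) k - cmp (y t') k - hh * cmp (f (y t')) k\<bar> < hh * \<eta>1"
            by (simp add: mult.commute)
          have e2: "\<bar>cmp (y t') k + hh * cmp (f (y t')) k\<bar> \<le> \<bar>cmp (y t') k\<bar> + hh * D k"
            unfolding D_def by (rule abs_step) (use hh h0L in auto)
          have "\<bar>cmp (y s) k\<bar> \<le> \<bar>cmp (y t') k + hh * cmp (f (y t')) k\<bar> + \<bar>cmp (y s) k - cmp (y t') k - hh * cmp (f (y t')) k\<bar>"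
            using abs_triangle_ineq[of "cmp (y t') k + hh * cmp (f (y t')) k" "cmp (y s) k - cmp (y t') k - hh * cmp (f (y t')) k"]
            by simp
          then show ?thesis using e1 e2 by (simp add: algebra_simps)
        qed
        have s1: "V s \<le> (\<Sum>k\<in>UNIV. v k * (\<bar>cmp (y t') k\<bar> + hh * (D k + \<eta>1)))"
          unfolding V_def VV_def
          by (rule sum_mono, rule mult_left_mono[OF comp]) (use vpos in \<open>simp add: less_imp_le\<close>)
        have s2: "(\<Sum>k\<in>UNIV. v k * (\<bar>cmp (y t') k\<bar> + hh * (D k + \<eta>1)))
            = (\<Sum>k\<in>UNIV. v k * \<bar>cmp (y t') k\<bar> + hh * (v k * D k) + (hh * \<eta>1) * v k)"
          by (rule sum.cong) (simp_all add: algebra_simps)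
        have s3: "(\<Sum>k\<in>UNIV. v k * \<bar>cmp (y t') k\<bar> + hh * (v k * D k) + (hh * \<eta>1) * v k)
            = V t' + hh * (\<Sum>k\<in>UNIV. v k * D k) + (hh * \<eta>1) * vs"
          unfolding V_def VV_def vs_def by (simp only: sum.distrib sum_distrib_left)
        have s4: "(hh * \<eta>1) * vs = hh * \<eta>" unfolding \<eta>1_def using vs_pos by simp
        have s5: "hh * (\<Sum>k\<in>UNIV. v k * D k) \<le> hh * (- (a/2) * V t')"
          using key[of "y t'"] VtR hh unfolding D_def V_def by (intro mult_left_mono) auto
        have s6: "(s - t') * ((a/2) * V t' - \<eta>) = - (hh * (- (a/2) * V t')) - hh * \<eta>"
          unfolding hh_def by (simp add: algebra_simps)
        show ?case using s1 s2 s3 s4 s5 s6 by linarith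
      qed
    qed
    have cmpE: "V t \<le> (V 0 + \<epsilon>) * exp (- lam * t)" if eps: "\<epsilon> > 0" "\<epsilon> \<le> R / 2" for \<epsilon>
      unfolding lam_def
    proof (rule comparison[where V=V and T=T and b' = "a/2" and R = R])
      show "continuous_on {0..T} V" by (rule Vcont)
      show "0 < a / 4" "a/4 < a/2" using apos by auto
      show "V 0 < V 0 + \<epsilon>" using eps by simp
      show "V 0 + \<epsilon> \<le> R" using eps V0R by simp
      show "V 0 \<ge> 0" unfolding V_def by (rule VV0)
      show "t \<in> {0..T}" by (rule t)
      show "\<And>t \<eta>. t \<in> {0..<T} \<Longrightarrow> V t \<le> R \<Longrightarrow> \<eta> > 0 \<Longrightarrow>
        eventually (\<lambda>s. V s \<le> V t - (s - t) * (a/2 * V t - \<eta>)) (at_right t)"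
        by (rule dini)
    qed
    have Vt: "V t \<le> V 0 * exp (- lam * t)"
    proof (rule ccontr)
      assume "\<not> V t \<le> V 0 * exp (- lam * t)"
      then have gap: "V t - V 0 * exp (- lam * t) > 0" by simp
      define \<epsilon> where "\<epsilon> = min (R/2) ((V t - V 0 * exp (- lam * t)) / (2 * exp (- lam * t)))"
      have e: "\<epsilon> > 0" "\<epsilon> \<le> R/2" unfolding \<epsilon>_def using Rpos gap by auto
      have "\<epsilon> * exp (- lam * t) \<le> (V t - V 0 * exp (- lam * t)) / 2"
      proof -
        have "\<epsilon> \<le> (V t - V 0 * exp (- lam * t)) / (2 * exp (- lam * t))" unfolding \<epsilon>_def by simp
        then have "\<epsilon> * exp (- lam * t) \<le> (V t - V 0 * exp (- lam * t)) / (2 * exp (- lam * t)) * exp (- lam * t)"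
          by (rule mult_right_mono) simp
        also have "\<dots> = (V t - V 0 * exp (- lam * t)) / 2" by simp
        finally show ?thesis .
      qed
      then have "(V 0 + \<epsilon>) * exp (- lam * t) < V t" using gap by (simp add: algebra_simps)
      then show False using cmpE[OF e] by simp
    qed
    have "norm (y t) \<le> WW (y t)" unfolding WW_def by (rule nle)
    also have "\<dots> \<le> V t / vmin" unfolding V_def by (rule WV')
    also have "\<dots> \<le> V 0 * exp (- lam * t) / vmin" using Vt vmin_pos by (simp add: divide_right_mono)
    also have "\<dots> \<le> vs * norm (y 0) * exp (- lam * t) / vmin"
      using VW[of "y 0"] vmin_pos unfolding V_def by (intro divide_right_mono mult_right_mono) auto
    also have "\<dots> = c * exp (- lam * t) * norm (y 0)" unfolding c_def by simp
    finally show "norm (y t) \<le> c * exp (- lam * t) * norm (y 0)" .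
  qed
qed



definition cmp :: "(real^'n) \<times> (real^'n) \<times> (real^'n) \<Rightarrow> 'n + 'n + 'n \<Rightarrow> real" where
  "cmp Y k = (case k of Inl i \<Rightarrow> fst Y $ i | Inr (Inl i) \<Rightarrow> fst (snd Y) $ i | Inr (Inr i) \<Rightarrow> snd (snd Y) $ i)"

lemma cmp_simps [simp]:
  "cmp (e, x, r) (Inl i) = e $ i" "cmp (e, x, r) (Inr (Inl i)) = x $ i" "cmp (e, x, r) (Inr (Inr i)) = r $ i"
  by (simp_all add: cmp_def)

lemma sum3: "(\<Sum>k\<in>(UNIV::('n::finite + 'n + 'n) set). g k) =
   (\<Sum>i\<in>UNIV. g (Inl i)) + (\<Sum>i\<in>UNIV. g (Inr (Inl i))) + (\<Sum>i\<in>UNIV. g (Inr (Inr i)))"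
  by (simp add: sum_UNIV_Plus add.assoc)

lemma cmp_bl: "bounded_linear (\<lambda>Y. cmp Y k)"
proof (cases k)
  case (Inl i)
  have "bounded_linear (\<lambda>Y::(real^'a) \<times> (real^'a) \<times> (real^'a). fst Y $ i)"
    by (rule bounded_linear_compose[OF bounded_linear_vec_nth bounded_linear_fst])
  then show ?thesis using Inl by (simp add: cmp_def)
next
  case (Inr kk)
  show ?thesis
  proof (cases kk)
    case (Inl i)
    have "bounded_linear (\<lambda>Y::(real^'a) \<times> (real^'a) \<times> (real^'a). fst (snd Y) $ i)"
      by (rule bounded_linear_compose[OF bounded_linear_vec_nth bounded_linear_compose[OF bounded_linear_fst bounded_linear_snd]])
    then show ?thesis using Inr Inl by (simp add: cmp_def)
  next
    case (Inr i)
    have "bounded_linear (\<lambda>Y::(real^'a) \<times> (real^'a) \<times> (real^'a). snd (snd Y) $ i)"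
      by (rule bounded_linear_compose[OF bounded_linear_vec_nth bounded_linear_compose[OF bounded_linear_snd bounded_linear_snd]])
    then show ?thesis using \<open>k = Inr kk\<close> Inr by (simp add: cmp_def)
  qed
qed

lemma cmp_cle: "\<bar>cmp Y k\<bar> \<le> norm Y"
proof -
  obtain e x r where Y: "Y = (e, x, r)" by (cases Y) auto
  show ?thesis
  proof (cases k)
    case (Inl i)
    then show ?thesis unfolding Y using component_le_norm_cart[of e i] norm_fst_le[of e "(x, r)"] by simp
  next
    case (Inr kk)
    then show ?thesis
    proof (cases kk)
      case (Inl i)
      then show ?thesis unfolding Y \<open>k = Inr kk\<close>
        using component_le_norm_cart[of x i] norm_fst_le[of x r] norm_snd_le[of "(x, r)" e] by simp
    next
      case (Inr i)
      then show ?thesis unfolding Y \<open>k = Inr kk\<close>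
        using component_le_norm_cart[of r i] norm_snd_le[of r x] norm_snd_le[of "(x, r)" e] by simp
    qed
  qed
qed

lemma cmp_nle: "norm Y \<le> (\<Sum>k\<in>UNIV. \<bar>cmp Y k\<bar>)"
proof -
  obtain e x r where Y: "Y = (e, x, r)" by (cases Y) auto
  have "norm (e, x, r) \<le> norm e + norm (x, r)" by (rule norm_Pair_le)
  also have "\<dots> \<le> norm e + (norm x + norm r)" using norm_Pair_le[of x r] by simp
  also have "\<dots> \<le> (\<Sum>i\<in>UNIV. \<bar>e$i\<bar>) + ((\<Sum>i\<in>UNIV. \<bar>x$i\<bar>) + (\<Sum>i\<in>UNIV. \<bar>r$i\<bar>))"
    using norm_le_l1_cart[of e] norm_le_l1_cart[of x] norm_le_l1_cart[of r] by simp
  finally show ?thesis unfolding Y sum3 by simp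
qed

lemma sum_delta_mult: "(\<Sum>j\<in>(UNIV::'n::finite set). (if i = j then c else 0) * (z j::real)) = c * z i"
  by (simp add: if_distrib[of "\<lambda>x. x * _"] sum.delta cong: if_cong)

lemma sum_delta_mult': "(\<Sum>j\<in>(UNIV::'n::finite set). (z j::real) * (if j = i then c else 0)) = z i * c"
proof -
  have "(\<Sum>j\<in>UNIV. z j * (if j = i then c else 0)) = (\<Sum>j\<in>(UNIV::'n set). if j = i then z j * c else 0)"
    by (rule sum.cong) auto
  also have "\<dots> = z i * c" by (subst sum.delta) auto
  finally show ?thesis .
qed

lemma pos_lower_bound:
  fixes g :: "'n::finite \<Rightarrow> real"
  assumes "\<And>j. g j > 0"
  shows "\<exists>m>0. \<forall>j. m \<le> g j"
proof -
  have "Min (range g) \<in> range g" by (rule Min_in) auto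
  then have "Min (range g) > 0" using assms by auto
  moreover have "\<forall>j. Min (range g) \<le> g j" by (auto intro: Min_le)
  ultimately show ?thesis by blast
qed



fun Lsys :: "('n::finite \<Rightarrow> real) \<Rightarrow> ('n \<Rightarrow> 'n \<Rightarrow> real) \<Rightarrow> ('n \<Rightarrow> real) \<Rightarrow> ('n \<Rightarrow> real)
    \<Rightarrow> ('n \<Rightarrow> real) \<Rightarrow> ('n \<Rightarrow> real) \<Rightarrow> 'n + 'n + 'n \<Rightarrow> 'n + 'n + 'n \<Rightarrow> real" where
  "Lsys N F al be si de (Inl i) (Inl j) = (if i = j then - si i - gam N F i else 0) + Phi N F i j"
| "Lsys N F al be si de (Inl i) (Inr (Inl j)) = (if i = j then be i else 0)"
| "Lsys N F al be si de (Inl i) (Inr (Inr j)) = 0"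
| "Lsys N F al be si de (Inr (Inl i)) (Inl j) = (if i = j then si i else 0)"
| "Lsys N F al be si de (Inr (Inl i)) (Inr (Inl j)) = (if i = j then - de i - gam N F i else 0) + Phi N F i j"
| "Lsys N F al be si de (Inr (Inl i)) (Inr (Inr j)) = 0"
| "Lsys N F al be si de (Inr (Inr i)) (Inl j) = 0"
| "Lsys N F al be si de (Inr (Inr i)) (Inr (Inl j)) = (if i = j then de i else 0)"
| "Lsys N F al be si de (Inr (Inr i)) (Inr (Inr j)) = (if i = j then - al i - gam N F i else 0) + Phi N F i j"

definition nlsys :: "('n::finite \<Rightarrow> real) \<Rightarrow> (real^'n) \<times> (real^'n) \<times> (real^'n) \<Rightarrow> 'n + 'n + 'n \<Rightarrow> real" where
  "nlsys be Y k = (case k of Inl i \<Rightarrow> - (be i * fst (snd Y) $ i * (fst Y $ i + fst (snd Y) $ i + snd (snd Y) $ i))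
      | Inr _ \<Rightarrow> 0)"

lemma gam_nonneg: "(\<And>i. N i > 0) \<Longrightarrow> (\<And>i j. F i j \<ge> 0) \<Longrightarrow> gam N F j \<ge> 0"
  unfolding gam_def by (simp add: sum_nonneg less_imp_le)

lemma wgt_nonneg: "(\<And>i j. F i j \<ge> 0) \<Longrightarrow> wgt F i j \<ge> 0"
  unfolding wgt_def by (simp add: sum_nonneg)

lemma Phi_nonneg: "(\<And>i. N i > 0) \<Longrightarrow> (\<And>i j. F i j \<ge> 0) \<Longrightarrow> Phi N F i j \<ge> 0"
  unfolding Phi_def using gam_nonneg[of N F j] wgt_nonneg[of F i j]
  by (metis divide_nonneg_pos less_imp_le mult_nonneg_nonneg)

lemma sum_wgt_le: assumes "\<And>i. F i i = 0" shows "(\<Sum>i\<in>UNIV. wgt F i j) \<le> 1"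
proof -
  define S where "S = (\<Sum>l\<in>UNIV - {j}. F l j)"
  have "(\<Sum>i\<in>UNIV. wgt F i j) = (\<Sum>i\<in>UNIV. if i = j then 0 else F i j / S)"
    unfolding wgt_def S_def by simp
  also have "\<dots> = (\<Sum>i\<in>UNIV. F i j / S) - F j j / S" by (rule sum_skip)
  also have "\<dots> = (\<Sum>i\<in>UNIV. F i j) / S" using assms by (simp add: sum_divide_distrib)
  also have "(\<Sum>i\<in>UNIV. F i j) = F j j + S" unfolding S_def by (simp add: sum.remove)
  also have "(F j j + S) / S = S / S" using assms by simp
  also have "S / S \<le> 1" by (cases "S = 0") auto
  finally show ?thesis .
qed

lemma NPhi_le:
  assumes N: "\<And>i. N i > 0" and F: "\<And>i j. F i j \<ge> 0" and Fd: "\<And>i. F i i = 0"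
  shows "(\<Sum>i\<in>UNIV. N i * Phi N F i j) \<le> N j * gam N F j"
proof -
  have "(\<Sum>i\<in>UNIV. N i * Phi N F i j) = (\<Sum>i\<in>UNIV. (N j * gam N F j) * wgt F i j)"
  proof (rule sum.cong)
    fix i
    have "N i \<noteq> 0" using N[of i] by simp
    then show "N i * Phi N F i j = (N j * gam N F j) * wgt F i j" unfolding Phi_def by (simp add: field_simps)
  qed simp
  also have "\<dots> = (N j * gam N F j) * (\<Sum>i\<in>UNIV. wgt F i j)" by (simp add: sum_distrib_left)
  also have "\<dots> \<le> (N j * gam N F j) * 1"
    by (rule mult_left_mono[OF sum_wgt_le[OF Fd]]) (use N[of j] gam_nonneg[where N=N and F=F and j=j] N F in \<open>simp add: less_imp_le\<close>)
  finally show ?thesis by simp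
qed

lemma Umat_simps [simp]:
  "Umat N F beta sig delta $ Inl i $ Inl j = (if i = j then - sig i - gam N F i else 0) + Phi N F i j"
  "Umat N F beta sig delta $ Inl i $ Inr j = (if i = j then beta i else 0)"
  "Umat N F beta sig delta $ Inr i $ Inl j = (if i = j then sig i else 0)"
  "Umat N F beta sig delta $ Inr i $ Inr j = (if i = j then - delta i - gam N F i else 0) + Phi N F i j"
  by (simp_all add: Umat_def)



lemma sum3_cases:
  obtains (a) i where "k = Inl i" | (b) i where "k = Inr (Inl i)" | (c) i where "k = Inr (Inr i)"
  by (metis sum.exhaust)

lemma Lsys_off:
  assumes N: "\<And>i. N i > 0" and F: "\<And>i j. F i j \<ge> 0"
    and pos: "\<And>i. be i > 0" "\<And>i. si i > 0" "\<And>i. de i > 0"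
    and kj: "k \<noteq> j"
  shows "Lsys N F al be si de k j \<ge> 0"
  using kj Phi_nonneg[OF N F] pos
  by (cases k rule: sum3_cases; cases j rule: sum3_cases) (auto simp: less_imp_le)

lemma fL_sys:
  "cmp (seirs_field N F al be si de Y) k = (\<Sum>j\<in>UNIV. Lsys N F al be si de k j * cmp Y j) + nlsys be Y k"
proof -
  obtain e x r where Y: "Y = (e, x, r)" by (cases Y) auto
  show ?thesis
  proof (cases k rule: sum3_cases)
    case (a i)
    have "(\<Sum>j\<in>UNIV. Lsys N F al be si de (Inl i) j * cmp (e, x, r) j)
        = (- si i - gam N F i) * e$i + (\<Sum>j\<in>UNIV. Phi N F i j * e$j) + be i * x$i"
      by (simp add: sum3 distrib_right sum.distrib sum_delta_mult)
    then show ?thesis unfolding Y a by (simp add: seirs_field_def nlsys_def algebra_simps)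
  next
    case (b i)
    have "(\<Sum>j\<in>UNIV. Lsys N F al be si de (Inr (Inl i)) j * cmp (e, x, r) j)
        = si i * e$i + (- de i - gam N F i) * x$i + (\<Sum>j\<in>UNIV. Phi N F i j * x$j)"
      by (simp add: sum3 distrib_right sum.distrib sum_delta_mult)
    then show ?thesis unfolding Y b by (simp add: seirs_field_def nlsys_def algebra_simps)
  next
    case (c i)
    have "(\<Sum>j\<in>UNIV. Lsys N F al be si de (Inr (Inr i)) j * cmp (e, x, r) j)
        = de i * x$i + (- al i - gam N F i) * r$i + (\<Sum>j\<in>UNIV. Phi N F i j * r$j)"
      by (simp add: sum3 distrib_right sum.distrib sum_delta_mult)
    then show ?thesis unfolding Y c by (simp add: seirs_field_def nlsys_def algebra_simps)
  qed
qed

lemma nl_bound: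
  assumes pos: "\<And>i. be i > 0"
  shows "\<bar>nlsys be Y k\<bar> \<le> (3 * (\<Sum>i\<in>UNIV. be i)) * (\<Sum>j\<in>UNIV. \<bar>cmp Y j\<bar>)^2"
proof -
  obtain e x r where Y: "Y = (e, x, r)" by (cases Y) auto
  define W where "W = (\<Sum>j\<in>UNIV. \<bar>cmp Y j\<bar>)"
  have W0: "W \<ge> 0" unfolding W_def by (simp add: sum_nonneg)
  have cW: "\<bar>cmp Y j\<bar> \<le> W" for j unfolding W_def by (rule member_le_sum) auto
  have sb: "(\<Sum>i\<in>UNIV. be i) \<ge> 0" using pos by (simp add: sum_nonneg less_imp_le)
  show ?thesis
  proof (cases k rule: sum3_cases)
    case (a i)
    have ex: "\<bar>e$i\<bar> \<le> W" "\<bar>x$i\<bar> \<le> W" "\<bar>r$i\<bar> \<le> W"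
      using cW[of "Inl i"] cW[of "Inr (Inl i)"] cW[of "Inr (Inr i)"] unfolding Y by auto
    have s3: "\<bar>e$i + x$i + r$i\<bar> \<le> 3 * W" using ex by linarith
    have "\<bar>nlsys be Y k\<bar> = be i * \<bar>x$i\<bar> * \<bar>e$i + x$i + r$i\<bar>"
      unfolding Y a nlsys_def using pos[of i] by (simp add: abs_mult)
    also have "\<dots> \<le> be i * W * (3 * W)"
      using pos[of i] ex s3 W0 by (intro mult_mono) auto
    also have "\<dots> \<le> (\<Sum>i\<in>UNIV. be i) * W * (3 * W)"
      using W0 by (intro mult_right_mono member_le_sum) (auto intro: less_imp_le pos)
    finally show ?thesis unfolding W_def by (simp add: power2_eq_square algebra_simps)
  next
    case (b i)
    then show ?thesis unfolding nlsys_def using sb by simp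
  next
    case (c i)
    then show ?thesis unfolding nlsys_def using sb by simp
  qed
qed



lemma sum_delta_mult2: "(\<Sum>j\<in>(UNIV::'n::finite set). (z j::real) * (if j = i then c j else 0)) = z i * c i"
proof -
  have "(\<Sum>j\<in>UNIV. z j * (if j = i then c j else 0)) = (\<Sum>j\<in>(UNIV::'n set). if j = i then z j * c j else 0)"
    by (rule sum.cong) auto
  also have "\<dots> = z i * c i" by (subst sum.delta) auto
  finally show ?thesis .
qed

theorem proposition3:
  fixes N :: "'n::finite \<Rightarrow> real" and F :: "'n \<Rightarrow> 'n \<Rightarrow> real"
    and alpha beta sig delta :: "'n \<Rightarrow> real"
  assumes N_pos: "\<And>i. N i > 0"
    and F_nonneg: "\<And>i j. F i j \<ge> 0"
    and F_diag: "\<And>i. F i i = 0"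
    and A1: "\<And>j. (\<Sum>i\<in>UNIV - {j}. F j i) = (\<Sum>i\<in>UNIV - {j}. F i j)"
    and A2: "\<And>i. alpha i > 0" "\<And>i. beta i > 0" "\<And>i. sig i > 0" "\<And>i. delta i > 0"
    and sU: "spectral_abscissa (Umat N F beta sig delta) < 0"
  shows "loc_exp_stable_origin (seirs_field N F alpha beta sig delta) admissible"
proof -
  let ?U = "Umat N F beta sig delta"
  have PhiN: "Phi N F i j \<ge> 0" for i j by (rule Phi_nonneg[OF N_pos F_nonneg])
  have off: "?U$p$q \<ge> 0" if "p \<noteq> q" for p q
    using that PhiN A2
    by (cases p; cases q) (auto simp: less_imp_le)
  have nz: "det (mat s - ?U) \<noteq> 0" if "s \<ge> 0" for s by (rule sa_neg_det[OF sU that])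
  obtain w where wpos: "\<forall>j. w$j > 0" and wcol: "\<forall>j. (\<Sum>i\<in>UNIV. w$i * ?U$i$j) = -1"
    using mmatrix[of ?U, OF off nz] by blast
  define p where "p i = w $ Inl i" for i
  define q where "q i = w $ Inr i" for i
  have ppos: "p i > 0" "q i > 0" for i unfolding p_def q_def using wpos by auto
  have col1: "(\<Sum>i\<in>UNIV. p i * ((if i = j then - sig i - gam N F i else 0) + Phi N F i j))
      + (\<Sum>i\<in>UNIV. q i * (if i = j then sig i else 0)) = -1" for j
    using wcol[rule_format, of "Inl j"] unfolding p_def q_def by (simp add: sum_UNIV_Plus)
  have col2: "(\<Sum>i\<in>UNIV. p i * (if i = j then beta i else 0))
      + (\<Sum>i\<in>UNIV. q i * ((if i = j then - delta i - gam N F i else 0) + Phi N F i j)) = -1" for j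
    using wcol[rule_format, of "Inr j"] unfolding p_def q_def by (simp add: sum_UNIV_Plus)
  obtain \<epsilon> where eps: "\<epsilon> > 0" "\<forall>j. \<epsilon> \<le> 1 / (2 * N j * delta j)"
    using pos_lower_bound[of "\<lambda>j. 1 / (2 * N j * delta j)"] N_pos A2(4) by auto
  have epsd: "\<epsilon> * N j * delta j \<le> 1/2" for j
  proof -
    have "\<epsilon> * (N j * delta j) \<le> 1 / (2 * N j * delta j) * (N j * delta j)"
      using eps N_pos[of j] A2(4)[of j] by (intro mult_right_mono) (auto simp: less_imp_le)
    also have "\<dots> = 1/2" using N_pos[of j] A2(4)[of j] by simp
    finally show ?thesis by (simp add: mult.assoc)
  qed
  obtain a where apos: "a > 0" and ale: "\<forall>j. a \<le> min (1 / (2 * p j)) (min (1 / (2 * q j)) (alpha j))"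
    using pos_lower_bound[of "\<lambda>j. min (1 / (2 * p j)) (min (1 / (2 * q j)) (alpha j))"] ppos A2(1) by auto
  have ap: "a * p j \<le> 1/2" "a * q j \<le> 1/2" "a \<le> alpha j" for j
  proof -
    have "a * p j \<le> 1 / (2 * p j) * p j" using ale ppos[of j] by (intro mult_right_mono) (auto simp: less_imp_le)
    then show "a * p j \<le> 1/2" using ppos[of j] by simp
    have "a * q j \<le> 1 / (2 * q j) * q j" using ale ppos[of j] by (intro mult_right_mono) (auto simp: less_imp_le)
    then show "a * q j \<le> 1/2" using ppos[of j] by simp
    show "a \<le> alpha j" using ale by auto
  qed
  define v where "v k = (case k of Inl i \<Rightarrow> p i | Inr (Inl i) \<Rightarrow> q i | Inr (Inr i) \<Rightarrow> \<epsilon> * N i)" for k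
  have v_simps [simp]: "v (Inl i) = p i" "v (Inr (Inl i)) = q i" "v (Inr (Inr i)) = \<epsilon> * N i" for i
    unfolding v_def by simp_all
  have vpos: "v k > 0" for k
    using ppos eps N_pos by (cases k rule: sum3_cases) auto
  let ?L = "Lsys N F alpha beta sig delta"
  have col: "(\<Sum>k\<in>UNIV. v k * ?L k j) \<le> - a * v j" for j
  proof (cases j rule: sum3_cases)
    case (a j')
    have "(\<Sum>k\<in>UNIV. v k * ?L k j) = (\<Sum>i\<in>UNIV. p i * ((if i = j' then - sig i - gam N F i else 0) + Phi N F i j'))
      + (\<Sum>i\<in>UNIV. q i * (if i = j' then sig i else 0))"
      unfolding a by (simp add: sum3)
    then have "(\<Sum>k\<in>UNIV. v k * ?L k j) = -1" using col1[of j'] by simp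
    then show ?thesis unfolding a using ap(1)[of j'] by simp
  next
    case (b j')
    have "(\<Sum>k\<in>UNIV. v k * ?L k j) = (\<Sum>i\<in>UNIV. p i * (if i = j' then beta i else 0))
      + (\<Sum>i\<in>UNIV. q i * ((if i = j' then - delta i - gam N F i else 0) + Phi N F i j'))
      + (\<Sum>i\<in>UNIV. (\<epsilon> * N i) * (if i = j' then delta i else 0))"
      unfolding b by (simp add: sum3)
    also have "(\<Sum>i\<in>UNIV. (\<epsilon> * N i) * (if i = j' then delta i else 0)) = \<epsilon> * N j' * delta j'"
      by (rule sum_delta_mult2[where z="\<lambda>i. \<epsilon> * N i"])
    finally have "(\<Sum>k\<in>UNIV. v k * ?L k j) = -1 + \<epsilon> * N j' * delta j'" using col2[of j'] by simp
    then show ?thesis unfolding b using ap(2)[of j'] epsd[of j'] by simp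
  next
    case (c j')
    have "(\<Sum>k\<in>UNIV. v k * ?L k j) = (\<Sum>i\<in>UNIV. (\<epsilon> * N i) * ((if i = j' then - alpha i - gam N F i else 0) + Phi N F i j'))"
      unfolding c by (simp add: sum3)
    also have "\<dots> = (\<Sum>i\<in>UNIV. (\<epsilon> * N i) * (if i = j' then - alpha i - gam N F i else 0)) + \<epsilon> * (\<Sum>i\<in>UNIV. N i * Phi N F i j')"
      by (simp add: distrib_left sum.distrib sum_distrib_left mult.assoc)
    also have "(\<Sum>i\<in>UNIV. (\<epsilon> * N i) * (if i = j' then - alpha i - gam N F i else 0)) = \<epsilon> * N j' * (- alpha j' - gam N F j')"
      by (rule sum_delta_mult2[where z="\<lambda>i. \<epsilon> * N i"])
    finally have eq: "(\<Sum>k\<in>UNIV. v k * ?L k j) = \<epsilon> * N j' * (- alpha j' - gam N F j') + \<epsilon> * (\<Sum>i\<in>UNIV. N i * Phi N F i j')" .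
    have "\<epsilon> * (\<Sum>i\<in>UNIV. N i * Phi N F i j') \<le> \<epsilon> * (N j' * gam N F j')"
      using NPhi_le[where N=N and F=F and j=j', OF N_pos F_nonneg F_diag] eps by (intro mult_left_mono) auto
    then have "(\<Sum>k\<in>UNIV. v k * ?L k j) \<le> - (\<epsilon> * N j' * alpha j')"
      unfolding eq by (simp add: algebra_simps)
    also have "\<dots> \<le> - (a * (\<epsilon> * N j'))"
    proof -
      have "a * (\<epsilon> * N j') \<le> alpha j' * (\<epsilon> * N j')"
        using ap(3)[of j'] eps N_pos[of j'] by (intro mult_right_mono) auto
      then show ?thesis by (simp add: algebra_simps)
    qed
    finally show ?thesis unfolding c by simp
  qed
  show ?thesis
  proof (rule generic_stab[where cmp = cmp and L = ?L and nl = "nlsys beta" and v = v and a = a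
        and K = "3 * (\<Sum>i\<in>UNIV. beta i)"])
    show "\<And>k. bounded_linear (\<lambda>Y. cmp Y k)" by (rule cmp_bl)
    show "\<And>Y. norm Y \<le> (\<Sum>k\<in>UNIV. \<bar>cmp Y k\<bar>)" by (rule cmp_nle)
    show "\<And>Y k. \<bar>cmp Y k\<bar> \<le> norm Y" by (rule cmp_cle)
    show "\<And>Y k. cmp (seirs_field N F alpha beta sig delta Y) k = (\<Sum>j\<in>UNIV. ?L k j * cmp Y j) + nlsys beta Y k"
      by (rule fL_sys)
    show "\<And>k j. k \<noteq> j \<Longrightarrow> 0 \<le> ?L k j"
      by (rule Lsys_off[OF N_pos F_nonneg A2(2,3,4)])
    show "\<And>k. 0 < v k" by (rule vpos)
    show "0 < a" by (rule apos)
    show "\<And>j. (\<Sum>k\<in>UNIV. v k * ?L k j) \<le> - a * v j" by (rule col)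
    show "0 \<le> 3 * (\<Sum>i\<in>UNIV. beta i)" using A2(2) by (simp add: sum_nonneg less_imp_le)
    show "\<And>Y k. \<bar>nlsys beta Y k\<bar> \<le> 3 * (\<Sum>i\<in>UNIV. beta i) * (\<Sum>j\<in>UNIV. \<bar>cmp Y j\<bar>)\<^sup>2"
      by (rule nl_bound[OF A2(2)])
  qed
qed

end
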